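(* Let $\varphi$ be a finite conjunction of literals of the two forms $x\in y$ and $x = y\setminus z$ (with $x,y,z$ set variables), with finite set of variables $\mathrm{Vars}(\varphi)$. Let $M$ be a set assignment over $\mathrm{Vars}(\varphi)$ satisfying $\varphi$; let $\bar x,\bar y\in\mathrm{Vars}(\varphi)$, let $\overline{M}$ be a set assignment over $\mathrm{Vars}(\varphi)$ satisfying $\varphi$ with $\overline{M}\bar x\neq \overline{M}\bar y$, and let $\mathfrak{t}$ be a set belonging to exactly one of $\overline{M}\bar x$, $\overline{M}\bar y$. Fix a set $\mathfrak{s}$ with $\mathrm{rk}(\mathfrak{s})>\mathrm{rk}(M)$. Define $\mathsf{V}_0=\{u\in\mathrm{Vars}(\varphi)\mid \mathfrak{t}\in\overline{M}u\}$; $\mathsf{V}_n=\{u\in\mathrm{Vars}(\varphi)\mid Mu\cap\{Mw\mid w\in\mathsf{V}_{n-1}\}\neq\emptyset\}$ for $n\ge1$; $M_0v=Mv\cup\{\mathfrak{s}\}$ if $v\in\mathsf{V}_0$ and $M_0v=Mv$ otherwise; for $n\ge1$, $M_nv=M_{n-1}v\cup\{M_{n-1}u\mid u\in\mathsf{V}_{n-1},\ Mu\in Mv\}$ if $v\in\mathsf{V}_n$ and $M_nv=M_{n-1}v$ otherwise. Then for all $n\in\mathbb{N}$ and $v,x\in\mathrm{Vars}(\varphi)$: (a) $M_nv\neq\mathfrak{s}$; (b) $\mathfrak{s}\in M_nx$ if and only if $\mathfrak{s}\in M_0x$.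
   Context: A set assignment is a map from a finite set of set variables into the von Neumann universe $\mathcal{V}=\bigcup_\alpha\mathcal{V}_\alpha$, $\mathcal{V}_\alpha=\bigcup_{\beta<\alpha}\mathcal{P}(\mathcal{V}_\beta)$; it satisfies $x\in y$ iff $Mx\in My$ and $x=y\setminus z$ iff $Mx=My\setminus Mz$. The rank $\mathrm{rk}(s)$ of a set $s$ is the least ordinal $\alpha$ with $s\subseteq\mathcal{V}_\alpha$, and $\mathrm{rk}(M)=\max\{\mathrm{rk}(Mx)\mid x\in\mathrm{dom}(M)\}$. *)

theory Defs
  imports Main
begin

text \<open>A universe of pure sets is represented abstractly by a membership map
  elts :: 'v => 'v set (the elements of a set).  Every such structure is (Mostowski)
  isomorphic to a transitive class of von Neumann sets closed under these
  operations, e.g. a V_lambda with lambda a limit ordinal.\<close>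

definition set_universe :: "('v \<Rightarrow> 'v set) \<Rightarrow> bool" where
  "set_universe elts \<longleftrightarrow>
     inj elts \<and> wf {(x, y). x \<in> elts y} \<and>
     (\<forall>x F. finite F \<longrightarrow> (\<exists>y. elts y = elts x \<union> F))"

text \<open>Rank: rk s is the least ordinal alpha with s a subset of V_alpha, i.e.
  with rk y < alpha for every element y of s (since V_alpha is the set of sets
  of rank < alpha).  Ordinals are represented in an arbitrary well-order 'o,
  which is required to be large enough for this least element to exist.\<close>

definition is_rank :: "('v \<Rightarrow> 'v set) \<Rightarrow> ('v \<Rightarrow> 'o::wellorder) \<Rightarrow> bool" where
  "is_rank elts rk \<longleftrightarrow>
     (\<forall>x. (\<exists>\<alpha>. \<forall>y\<in>elts x. rk y < \<alpha>) \<and>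
          rk x = (LEAST \<alpha>. \<forall>y\<in>elts x. rk y < \<alpha>))"

definition adjoin :: "('v \<Rightarrow> 'v set) \<Rightarrow> 'v \<Rightarrow> 'v set \<Rightarrow> 'v" where
  "adjoin elts x F = (THE y. elts y = elts x \<union> F)"

datatype 'x literal = Mem 'x 'x | Diff 'x 'x 'x

fun lit_vars :: "'x literal \<Rightarrow> 'x set" where
  "lit_vars (Mem x y) = {x, y}"
| "lit_vars (Diff x y z) = {x, y, z}"

definition vars :: "'x literal list \<Rightarrow> 'x set" where
  "vars \<phi> = (\<Union>l\<in>set \<phi>. lit_vars l)"

fun holds_lit :: "('v \<Rightarrow> 'v set) \<Rightarrow> ('x \<Rightarrow> 'v) \<Rightarrow> 'x literal \<Rightarrow> bool" where
  "holds_lit elts M (Mem x y) \<longleftrightarrow> M x \<in> elts (M y)"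
| "holds_lit elts M (Diff x y z) \<longleftrightarrow> elts (M x) = elts (M y) - elts (M z)"

definition satisfies :: "('v \<Rightarrow> 'v set) \<Rightarrow> ('x \<Rightarrow> 'v) \<Rightarrow> 'x literal list \<Rightarrow> bool" where
  "satisfies elts M \<phi> \<longleftrightarrow> (\<forall>l\<in>set \<phi>. holds_lit elts M l)"

text \<open>The variable sets V_n (X = Vars(phi), Mb = the assignment M-bar).\<close>
primrec Vs :: "('v \<Rightarrow> 'v set) \<Rightarrow> 'x set \<Rightarrow> ('x \<Rightarrow> 'v) \<Rightarrow> ('x \<Rightarrow> 'v) \<Rightarrow> 'v \<Rightarrow> nat \<Rightarrow> 'x set" where
  "Vs elts X M Mb t 0 = {u \<in> X. t \<in> elts (Mb u)}"
| "Vs elts X M Mb t (Suc n) = {u \<in> X. elts (M u) \<inter> M ` Vs elts X M Mb t n \<noteq> {}}"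

primrec Ms :: "('v \<Rightarrow> 'v set) \<Rightarrow> 'x set \<Rightarrow> ('x \<Rightarrow> 'v) \<Rightarrow> ('x \<Rightarrow> 'v) \<Rightarrow> 'v \<Rightarrow> 'v \<Rightarrow> nat \<Rightarrow> 'x \<Rightarrow> 'v" where
  "Ms elts X M Mb t s 0 v =
     (if v \<in> Vs elts X M Mb t 0 then adjoin elts (M v) {s} else M v)"
| "Ms elts X M Mb t s (Suc n) v =
     (if v \<in> Vs elts X M Mb t (Suc n)
      then adjoin elts (Ms elts X M Mb t s n v)
             {Ms elts X M Mb t s n u | u. u \<in> Vs elts X M Mb t n \<and> M u \<in> elts (M v)}
      else Ms elts X M Mb t s n v)"

end

theory Submission
  imports Defs
begin

lemma adjoin_elts:
  assumes "set_universe elts" "finite F"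
  shows "elts (adjoin elts x F) = elts x \<union> F"
proof -
  from assms obtain y where y: "elts y = elts x \<union> F" unfolding set_universe_def by blast
  have inj: "inj elts" using assms(1) unfolding set_universe_def by blast
  have "\<exists>!y. elts y = elts x \<union> F" using y inj by (metis injD)
  then show ?thesis unfolding adjoin_def by (rule theI')
qed

lemma Vs_sub: "Vs elts X M Mb t n \<subseteq> X"
  by (cases n) auto

lemma fin_F:
  assumes "finite X"
  shows "finite {Ms elts X M Mb t s n u | u. u \<in> Vs elts X M Mb t n \<and> P u}"
proof -
  have "{Ms elts X M Mb t s n u | u. u \<in> Vs elts X M Mb t n \<and> P u} \<subseteq> Ms elts X M Mb t s n ` X"
  proof
    fix z assume "z \<in> {Ms elts X M Mb t s n u | u. u \<in> Vs elts X M Mb t n \<and> P u}"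
    then obtain u where "z = Ms elts X M Mb t s n u" "u \<in> Vs elts X M Mb t n" by blast
    then show "z \<in> Ms elts X M Mb t s n ` X" using Vs_sub[of elts X M Mb t n] by blast
  qed
  then show ?thesis using assms finite_subset by blast
qed

lemma inv:
  assumes su: "set_universe elts" and fX: "finite X"
  shows "Ms elts X M Mb t s n v \<noteq> M v \<Longrightarrow>
     (s, Ms elts X M Mb t s n v) \<in> {(x, y). x \<in> elts y}\<^sup>+"
proof (induction n arbitrary: v)
  case 0
  show ?case
  proof (cases "v \<in> Vs elts X M Mb t 0")
    case True
    then have "s \<in> elts (Ms elts X M Mb t s 0 v)"
      using adjoin_elts[OF su, of "{s}"] by simp
    then show ?thesis by blast
  next
    case False
    then have "Ms elts X M Mb t s 0 v = M v" by (simp only: Ms.simps if_False)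
    then show ?thesis using 0 by blast
  qed
next
  case (Suc n)
  let ?R = "{(x, y). x \<in> elts y}"
  show ?case
  proof (cases "v \<in> Vs elts X M Mb t (Suc n)")
    case False
    then have "Ms elts X M Mb t s (Suc n) v = Ms elts X M Mb t s n v" by (simp only: Ms.simps if_False)
    then show ?thesis using Suc by auto
  next
    case True
    let ?F = "{Ms elts X M Mb t s n u | u. u \<in> Vs elts X M Mb t n \<and> M u \<in> elts (M v)}"
    have E: "elts (Ms elts X M Mb t s (Suc n) v) = elts (Ms elts X M Mb t s n v) \<union> ?F"
      using True adjoin_elts[OF su fin_F[OF fX]] by simp
    show ?thesis
    proof (cases "Ms elts X M Mb t s n v = M v")
      case False
      then have "(s, Ms elts X M Mb t s n v) \<in> ?R\<^sup>+" using Suc.IH by blast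
      then obtain z where "(s, z) \<in> ?R\<^sup>*" "z \<in> elts (Ms elts X M Mb t s n v)"
        using tranclD2 by fastforce
      then have "z \<in> elts (Ms elts X M Mb t s (Suc n) v)" using E by blast
      then show ?thesis using \<open>(s, z) \<in> ?R\<^sup>*\<close>
        by (meson case_prodI mem_Collect_eq rtrancl_into_trancl1)
    next
      case eq: True
      have "\<not> ?F \<subseteq> elts (M v)"
      proof
        assume "?F \<subseteq> elts (M v)"
        then have "elts (Ms elts X M Mb t s (Suc n) v) = elts (M v)" using E eq by auto
        then show False using Suc.prems su unfolding set_universe_def by (metis injD)
      qed
      then obtain u where u: "u \<in> Vs elts X M Mb t n" "M u \<in> elts (M v)"
        "Ms elts X M Mb t s n u \<notin> elts (M v)" by blast
      then have "Ms elts X M Mb t s n u \<noteq> M u" by auto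
      then have "(s, Ms elts X M Mb t s n u) \<in> ?R\<^sup>+" using Suc.IH by blast
      moreover have "Ms elts X M Mb t s n u \<in> elts (Ms elts X M Mb t s (Suc n) v)"
        using E u by blast
      ultimately show ?thesis
        by (meson case_prodI mem_Collect_eq trancl_into_trancl)
    qed
  qed
qed

theorem lemma6:
  fixes elts :: "'v \<Rightarrow> 'v set" and rk :: "'v \<Rightarrow> 'o::wellorder"
    and \<phi> :: "'x literal list" and M Mb :: "'x \<Rightarrow> 'v"
    and xb yb :: 'x and t s :: 'v
  assumes "set_universe elts" and "is_rank elts rk"
    and "satisfies elts M \<phi>"
    and "xb \<in> vars \<phi>" and "yb \<in> vars \<phi>"
    and "satisfies elts Mb \<phi>" and "Mb xb \<noteq> Mb yb"
    and "(t \<in> elts (Mb xb)) \<noteq> (t \<in> elts (Mb yb))"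
    and "rk s > Max ((\<lambda>x. rk (M x)) ` vars \<phi>)"
  shows "\<forall>n::nat. \<forall>v\<in>vars \<phi>. \<forall>x\<in>vars \<phi>.
           Ms elts (vars \<phi>) M Mb t s n v \<noteq> s \<and>
           (s \<in> elts (Ms elts (vars \<phi>) M Mb t s n x) \<longleftrightarrow>
            s \<in> elts (Ms elts (vars \<phi>) M Mb t s 0 x))"
proof -
  let ?X = "vars \<phi>"
  let ?R = "{(x, y). x \<in> elts y}"
  have su: "set_universe elts" by fact
  have fX: "finite ?X" unfolding vars_def
  proof (rule finite_UN_I)
    show "finite (set \<phi>)" by simp
    fix l show "finite (lit_vars l)" by (cases l) auto
  qed
  have wf: "wf ?R" using su unfolding set_universe_def by blast
  have nr: "(s, s) \<notin> ?R\<^sup>+"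
    using wf_trancl[OF wf] by (meson wf_not_refl)
  have A: "Ms elts ?X M Mb t s n v \<noteq> s" if "v \<in> ?X" for n v
  proof
    assume h: "Ms elts ?X M Mb t s n v = s"
    show False
    proof (cases "Ms elts ?X M Mb t s n v = M v")
      case True
      have "rk (M v) \<le> Max ((\<lambda>x. rk (M x)) ` ?X)" using that fX by simp
      then show False using True h assms(9) by simp
    next
      case False
      then show False using inv[OF su fX False] h nr by simp
    qed
  qed
  have B: "s \<in> elts (Ms elts ?X M Mb t s n x) \<longleftrightarrow> s \<in> elts (Ms elts ?X M Mb t s 0 x)" for n x
  proof (induction n)
    case 0 then show ?case by simp
  next
    case (Suc n)
    let ?F = "{Ms elts ?X M Mb t s n u | u. u \<in> Vs elts ?X M Mb t n \<and> M u \<in> elts (M x)}"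
    have "s \<notin> ?F"
    proof
      assume "s \<in> ?F"
      then obtain u where "s = Ms elts ?X M Mb t s n u" "u \<in> Vs elts ?X M Mb t n" by blast
      moreover then have "u \<in> ?X" using Vs_sub[of elts ?X M Mb t n] by blast
      ultimately show False using A by metis
    qed
    have "s \<in> elts (Ms elts ?X M Mb t s (Suc n) x) \<longleftrightarrow> s \<in> elts (Ms elts ?X M Mb t s n x)"
    proof (cases "x \<in> Vs elts ?X M Mb t (Suc n)")
      case True
      then have "elts (Ms elts ?X M Mb t s (Suc n) x) = elts (Ms elts ?X M Mb t s n x) \<union> ?F"
        using adjoin_elts[OF su fin_F[OF fX]] by (simp only: Ms.simps if_True)
      then show ?thesis using \<open>s \<notin> ?F\<close> by blast
    next
      case False
      then show ?thesis by (simp only: Ms.simps if_False)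
    qed
    then show ?case using Suc by blast
  qed
  show ?thesis using A B by blast
qed

end
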